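(* Let $\varphi: M^m \hookrightarrow \mathbb{S}^{m+1}$ be a biharmonic hypersurface. Then at every point of $M$, $$\mathrm{Ricci}^M(\operatorname{grad} f,\operatorname{grad} f) = \Big(m-1-\frac{3m^2}{4} f^2\Big)|\operatorname{grad} f|^2 .$$
   Context: For a hypersurface $\varphi: M^m\hookrightarrow \mathbb{S}^{m+1}$ (unit sphere) with global unit normal $\eta$ and induced metric, the shape operator is $A(X) = -\nabla^{\mathbb{S}^{m+1}}_X \eta$, the mean curvature is $f = \frac{1}{m}\operatorname{trace} A$, and $\Delta = -\operatorname{trace}\nabla\operatorname{grad}$. The hypersurface is biharmonic if and only if $\Delta f = (m-|A|^2) f$ and $A(\operatorname{grad} f) = -\frac{m}{2} f \operatorname{grad} f$. *)

theory Defs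
  imports "HOL-Analysis.Analysis"
begin

text \<open>Local-coordinate (chart) description of a hypersurface
  phi : U \<subseteq> R^m \<rightarrow> S^(m+1) \<subseteq> R^(m+2), U open, with unit normal eta.
  All geometric quantities of the induced metric are written in the coordinates
  of the chart; tangent vectors are given by their coordinate components.\<close>

definition pd :: "'m::finite \<Rightarrow> (real^'m \<Rightarrow> 'b::real_normed_vector) \<Rightarrow> real^'m \<Rightarrow> 'b" where
  "pd i F x = frechet_derivative F (at x) (axis i 1)"

fun ipd :: "'m::finite list \<Rightarrow> (real^'m \<Rightarrow> 'b::real_normed_vector) \<Rightarrow> real^'m \<Rightarrow> 'b" where
  "ipd [] F = F"
| "ipd (i # is) F = pd i (ipd is F)"

definition smooth_on_chart :: "(real^'m::finite) set \<Rightarrow> (real^'m \<Rightarrow> 'b::real_normed_vector) \<Rightarrow> bool" where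
  "smooth_on_chart U F \<longleftrightarrow> (\<forall>is. \<forall>x\<in>U. ipd is F differentiable (at x))"

definition metric :: "(real^'m::finite \<Rightarrow> real^'n::finite) \<Rightarrow> real^'m \<Rightarrow> real^'m^'m" where
  "metric \<phi> x = (\<chi> i j. pd i \<phi> x \<bullet> pd j \<phi> x)"

definition metric_inv :: "(real^'m::finite \<Rightarrow> real^'n::finite) \<Rightarrow> real^'m \<Rightarrow> real^'m^'m" where
  "metric_inv \<phi> x = matrix_inv (metric \<phi> x)"

text \<open>Second fundamental form h_ij = <A d_i, d_j> with A(X) = - nabla_X eta,
  which equals <eta, d_i d_j phi>.\<close>
definition sff :: "(real^'m::finite \<Rightarrow> real^'n::finite) \<Rightarrow> (real^'m \<Rightarrow> real^'n) \<Rightarrow> real^'m \<Rightarrow> real^'m^'m" where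
  "sff \<phi> \<eta> x = (\<chi> i j. pd i (pd j \<phi>) x \<bullet> \<eta> x)"

definition mean_curv :: "(real^'m::finite \<Rightarrow> real^'n::finite) \<Rightarrow> (real^'m \<Rightarrow> real^'n) \<Rightarrow> real^'m \<Rightarrow> real" where
  "mean_curv \<phi> \<eta> x = (1 / real CARD('m)) *
     (\<Sum>i\<in>UNIV. \<Sum>j\<in>UNIV. metric_inv \<phi> x $ i $ j * sff \<phi> \<eta> x $ i $ j)"

definition shape_norm2 :: "(real^'m::finite \<Rightarrow> real^'n::finite) \<Rightarrow> (real^'m \<Rightarrow> real^'n) \<Rightarrow> real^'m \<Rightarrow> real" where
  "shape_norm2 \<phi> \<eta> x = (\<Sum>i\<in>UNIV. \<Sum>j\<in>UNIV. \<Sum>k\<in>UNIV. \<Sum>l\<in>UNIV.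
     metric_inv \<phi> x $ i $ k * metric_inv \<phi> x $ j $ l * sff \<phi> \<eta> x $ i $ j * sff \<phi> \<eta> x $ k $ l)"

definition shape_op :: "(real^'m::finite \<Rightarrow> real^'n::finite) \<Rightarrow> (real^'m \<Rightarrow> real^'n) \<Rightarrow> real^'m \<Rightarrow> real^'m \<Rightarrow> real^'m" where
  "shape_op \<phi> \<eta> x X = (\<chi> i. \<Sum>k\<in>UNIV. \<Sum>j\<in>UNIV. metric_inv \<phi> x $ i $ k * sff \<phi> \<eta> x $ k $ j * X $ j)"

definition grad_chart :: "(real^'m::finite \<Rightarrow> real^'n::finite) \<Rightarrow> (real^'m \<Rightarrow> real) \<Rightarrow> real^'m \<Rightarrow> real^'m" where
  "grad_chart \<phi> u x = (\<chi> i. \<Sum>j\<in>UNIV. metric_inv \<phi> x $ i $ j * pd j u x)"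

definition g_inner :: "(real^'m::finite \<Rightarrow> real^'n::finite) \<Rightarrow> real^'m \<Rightarrow> real^'m \<Rightarrow> real^'m \<Rightarrow> real" where
  "g_inner \<phi> x X Y = (\<Sum>i\<in>UNIV. \<Sum>j\<in>UNIV. metric \<phi> x $ i $ j * X $ i * Y $ j)"

text \<open>Laplace-Beltrami operator with the sign convention Delta = - trace nabla grad:
  Delta u = - (1/sqrt(det g)) d_i (sqrt(det g) g^ij d_j u).\<close>
definition laplacian :: "(real^'m::finite \<Rightarrow> real^'n::finite) \<Rightarrow> (real^'m \<Rightarrow> real) \<Rightarrow> real^'m \<Rightarrow> real" where
  "laplacian \<phi> u x = - (1 / sqrt (det (metric \<phi> x))) *
     (\<Sum>i\<in>UNIV. pd i (\<lambda>y. sqrt (det (metric \<phi> y)) *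
        (\<Sum>j\<in>UNIV. metric_inv \<phi> y $ i $ j * pd j u y)) x)"

definition christoffel :: "(real^'m::finite \<Rightarrow> real^'n::finite) \<Rightarrow> 'm \<Rightarrow> 'm \<Rightarrow> 'm \<Rightarrow> real^'m \<Rightarrow> real" where
  "christoffel \<phi> k i j x = (1/2) * (\<Sum>l\<in>UNIV. metric_inv \<phi> x $ k $ l *
     (pd i (\<lambda>y. metric \<phi> y $ j $ l) x + pd j (\<lambda>y. metric \<phi> y $ i $ l) x
      - pd l (\<lambda>y. metric \<phi> y $ i $ j) x))"

definition ricci :: "(real^'m::finite \<Rightarrow> real^'n::finite) \<Rightarrow> real^'m \<Rightarrow> real^'m^'m" where
  "ricci \<phi> x = (\<chi> i j. \<Sum>k\<in>UNIV.
      pd k (christoffel \<phi> k i j) x - pd j (christoffel \<phi> k i k) x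
      + (\<Sum>l\<in>UNIV. christoffel \<phi> k k l x * christoffel \<phi> l i j x
                   - christoffel \<phi> k j l x * christoffel \<phi> l i k x))"

definition ricci_form :: "(real^'m::finite \<Rightarrow> real^'n::finite) \<Rightarrow> real^'m \<Rightarrow> real^'m \<Rightarrow> real^'m \<Rightarrow> real" where
  "ricci_form \<phi> x X Y = (\<Sum>i\<in>UNIV. \<Sum>j\<in>UNIV. ricci \<phi> x $ i $ j * X $ i * Y $ j)"

definition sphere_hypersurface_chart ::
  "(real^'m::finite) set \<Rightarrow> (real^'m \<Rightarrow> real^'n::finite) \<Rightarrow> (real^'m \<Rightarrow> real^'n) \<Rightarrow> bool" where
  "sphere_hypersurface_chart U \<phi> \<eta> \<longleftrightarrow>
     open U \<and> CARD('n) = CARD('m) + 2 \<and>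
     smooth_on_chart U \<phi> \<and> smooth_on_chart U \<eta> \<and>
     (\<forall>x\<in>U. norm (\<phi> x) = 1) \<and>
     (\<forall>x\<in>U. inj (frechet_derivative \<phi> (at x))) \<and>
     (\<forall>x\<in>U. norm (\<eta> x) = 1 \<and> \<eta> x \<bullet> \<phi> x = 0 \<and> (\<forall>i. \<eta> x \<bullet> pd i \<phi> x = 0))"

text \<open>Biharmonicity, via the characterization given in the paper:
  Delta f = (m - |A|^2) f and A(grad f) = -(m/2) f grad f.\<close>
definition biharmonic_chart ::
  "(real^'m::finite) set \<Rightarrow> (real^'m \<Rightarrow> real^'n::finite) \<Rightarrow> (real^'m \<Rightarrow> real^'n) \<Rightarrow> bool" where
  "biharmonic_chart U \<phi> \<eta> \<longleftrightarrow>
     (\<forall>x\<in>U. laplacian \<phi> (mean_curv \<phi> \<eta>) x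
              = (real CARD('m) - shape_norm2 \<phi> \<eta> x) * mean_curv \<phi> \<eta> x) \<and>
     (\<forall>x\<in>U. shape_op \<phi> \<eta> x (grad_chart \<phi> (mean_curv \<phi> \<eta>) x)
              = (- (real CARD('m) / 2) * mean_curv \<phi> \<eta> x) *\<^sub>R grad_chart \<phi> (mean_curv \<phi> \<eta>) x)"

end

theory Submission
  imports Defs
begin

lemma pd_has:
  assumes "(F has_derivative D) (at y)"
  shows "pd i F y = D (axis i 1)"
  using assms frechet_derivative_at unfolding pd_def by metis

lemma pd_local:
  assumes "open U" "y \<in> U" "\<And>z. z \<in> U \<Longrightarrow> F z = G z"
  shows "pd i F y = pd i G y"
proof -
  have "\<And>D. (F has_derivative D) (at y) \<longleftrightarrow> (G has_derivative D) (at y)"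
    using assms has_derivative_transform_within_open[of _ _ y UNIV U] by metis
  then show ?thesis unfolding pd_def frechet_derivative_def by simp
qed

lemma differentiable_local:
  assumes "open U" "y \<in> U" "\<And>z. z \<in> U \<Longrightarrow> F z = G z" "F differentiable (at y)"
  shows "G differentiable (at y)"
  using assms has_derivative_transform_within_open[of F _ y UNIV U G] unfolding differentiable_def
  by metis

lemma pd_works:
  assumes "F differentiable (at y)"
  shows "(F has_derivative frechet_derivative F (at y)) (at y)"
  using assms frechet_derivative_works by blast

lemma line_deriv:
  fixes F :: "real^'m \<Rightarrow> real^'n"
  assumes "F differentiable (at (p + s *\<^sub>R v))"
  shows "((\<lambda>s. F (p + s *\<^sub>R v) $ k) has_derivative
          (\<lambda>h. h * (frechet_derivative F (at (p + s *\<^sub>R v)) v $ k))) (at s within S)"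
proof -
  let ?D = "frechet_derivative F (at (p + s *\<^sub>R v))"
  have d1: "((\<lambda>s. p + s *\<^sub>R v) has_derivative (\<lambda>h. h *\<^sub>R v)) (at s within S)"
    by (auto intro!: derivative_eq_intros)
  have d2: "(F has_derivative ?D) (at (p + s *\<^sub>R v))"
    using assms frechet_derivative_works by blast
  have lin: "linear ?D" using d2 has_derivative_linear by blast
  have "((\<lambda>s. F (p + s *\<^sub>R v)) has_derivative (\<lambda>h. ?D (h *\<^sub>R v))) (at s within S)"
    using has_derivative_compose[OF d1 d2] by (simp add: o_def)
  then have "((\<lambda>s. F (p + s *\<^sub>R v) $ k) has_derivative (\<lambda>h. ?D (h *\<^sub>R v) $ k)) (at s within S)"
    using bounded_linear.has_derivative[OF bounded_linear_vec_nth] by blast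
  moreover have "\<And>h. ?D (h *\<^sub>R v) $ k = h * (?D v $ k)"
    using lin by (simp add: linear_scale)
  ultimately show ?thesis by simp
qed

lemma line_deriv_pd:
  fixes F :: "real^'m \<Rightarrow> real^'n"
  assumes "F differentiable (at (p + s *\<^sub>R axis i 1))"
  shows "((\<lambda>s. F (p + s *\<^sub>R axis i 1) $ k) has_derivative
          (\<lambda>h. h * (pd i F (p + s *\<^sub>R axis i 1) $ k))) (at s within S)"
  using line_deriv[OF assms] unfolding pd_def .

lemma schwarz:
  fixes F :: "real^'m \<Rightarrow> real^'n"
  assumes U: "open U" "x \<in> U"
    and dF: "\<And>y. y\<in>U \<Longrightarrow> F differentiable (at y)"
    and di: "\<And>y. y\<in>U \<Longrightarrow> pd i F differentiable (at y)"
    and dj: "\<And>y. y\<in>U \<Longrightarrow> pd j F differentiable (at y)"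
    and ci: "isCont (pd j (pd i F)) x" and cj: "isCont (pd i (pd j F)) x"
  shows "pd i (pd j F) x = pd j (pd i F) x"
proof (cases "i = j")
  case True then show ?thesis by simp
next
  case False
  let ?a = "axis i 1 :: real^'m" and ?b = "axis j 1 :: real^'m"
  let ?P = "\<lambda>s t. x + s *\<^sub>R ?a + t *\<^sub>R ?b"
  have na: "norm ?a = 1" "norm ?b = 1" by simp_all
  show ?thesis
  proof (subst vec_eq_iff, intro allI)
    fix k
    let ?A = "pd j (pd i F) x $ k" and ?B = "pd i (pd j F) x $ k"
    have key: "\<bar>?B - ?A\<bar> < 2 * e" if e: "e > 0" for e
    proof -
      obtain d1 where d1: "d1 > 0" "\<And>y. dist y x < d1 \<Longrightarrow> dist (pd j (pd i F) y) (pd j (pd i F) x) < e"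
        using ci e unfolding continuous_at_eps_delta by metis
      obtain d2 where d2: "d2 > 0" "\<And>y. dist y x < d2 \<Longrightarrow> dist (pd i (pd j F) y) (pd i (pd j F) x) < e"
        using cj e unfolding continuous_at_eps_delta by metis
      obtain r where r: "r > 0" "ball x r \<subseteq> U" using U open_contains_ball by blast
      define t where "t = min r (min d1 d2) / 3"
      have t: "t > 0" using r d1 d2 by (simp add: t_def)
      have t0: "0 \<le> t" "t \<le> t" using t by auto
      have inU: "?P s u \<in> U \<and> dist (?P s u) x < d1 \<and> dist (?P s u) x < d2"
        if "0 \<le> s" "s \<le> t" "0 \<le> u" "u \<le> t" for s u
      proof -
        have "dist (?P s u) x = norm (s *\<^sub>R ?a + u *\<^sub>R ?b)" by (simp add: dist_norm)
        also have "\<dots> \<le> norm (s *\<^sub>R ?a) + norm (u *\<^sub>R ?b)" by (rule norm_triangle_ineq)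
        also have "\<dots> = s + u" using that na by simp
        also have "\<dots> < min r (min d1 d2)" using that t unfolding t_def by linarith
        finally show ?thesis using r by (auto simp: dist_commute)
      qed
      have PU: "?P s u \<in> U" if "s \<in> {0..t}" "u \<in> {0..t}" for s u
      proof -
        have "0 \<le> s" "s \<le> t" "0 \<le> u" "u \<le> t" using that by (simp_all only: atLeastAtMost_iff)
        then show ?thesis using inU by blast
      qed
      define \<Delta> where "\<Delta> = F (?P t t) $ k - F (?P t 0) $ k - F (?P 0 t) $ k + F x $ k"
      define f1 where "f1 = (\<lambda>s. F ((x + t *\<^sub>R ?b) + s *\<^sub>R ?a) $ k - F (x + s *\<^sub>R ?a) $ k)"
      define f1' where "f1' = (\<lambda>s h. h * (pd i F ((x + t *\<^sub>R ?b) + s *\<^sub>R ?a) $ k - pd i F (x + s *\<^sub>R ?a) $ k))"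
      have "\<exists>s\<in>{0<..<t}. f1 t - f1 0 = f1' s (t - 0)"
      proof (rule mvt_simple[of 0 t f1 f1'])
        fix s assume s: "0 \<le> s" "s \<le> t"
        have e1: "(x + t *\<^sub>R ?b) + s *\<^sub>R ?a = ?P s t" by (simp add: algebra_simps)
        have e2: "x + s *\<^sub>R ?a = ?P s 0" by simp
        have "?P s t \<in> U" by (rule PU) (use s t0 in auto)
        then have "F differentiable at (?P s t)" by (rule dF)
        then have "F differentiable at ((x + t *\<^sub>R ?b) + s *\<^sub>R ?a)" by (simp only: e1)
        then have D1: "((\<lambda>s. F ((x + t *\<^sub>R ?b) + s *\<^sub>R ?a) $ k) has_derivative
           (\<lambda>h. h * (pd i F ((x + t *\<^sub>R ?b) + s *\<^sub>R ?a) $ k))) (at s within {0..t})"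
          by (rule line_deriv_pd)
        have "?P s 0 \<in> U" by (rule PU) (use s t0 in auto)
        then have "F differentiable at (?P s 0)" by (rule dF)
        then have "F differentiable at (x + s *\<^sub>R ?a)" by simp
        then have D2: "((\<lambda>s. F (x + s *\<^sub>R ?a) $ k) has_derivative
           (\<lambda>h. h * (pd i F (x + s *\<^sub>R ?a) $ k))) (at s within {0..t})"
          by (rule line_deriv_pd)
        show "(f1 has_derivative f1' s) (at s within {0..t})"
          unfolding f1_def f1'_def
          by (rule has_derivative_eq_rhs[OF has_derivative_diff[OF D1 D2]])
             (simp add: fun_eq_iff algebra_simps)
      qed (use t in simp)
      then obtain s where sm: "s \<in> {0<..<t}" and eq1': "f1 t - f1 0 = f1' s (t - 0)" by blast
      have s: "0 < s" "s < t" using sm by auto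
      have eq1: "\<Delta> = t * (pd i F (?P s t) $ k - pd i F (?P s 0) $ k)"
      proof -
        have "f1 t - f1 0 = \<Delta>" unfolding f1_def \<Delta>_def by (simp add: algebra_simps)
        moreover have "f1' s t = t * (pd i F (?P s t) $ k - pd i F (?P s 0) $ k)"
          unfolding f1'_def by (simp add: algebra_simps)
        ultimately show ?thesis using eq1' by simp
      qed
      define f2 where "f2 = (\<lambda>u. pd i F ((x + s *\<^sub>R ?a) + u *\<^sub>R ?b) $ k)"
      define f2' where "f2' = (\<lambda>u h. h * (pd j (pd i F) ((x + s *\<^sub>R ?a) + u *\<^sub>R ?b) $ k))"
      have "\<exists>u\<in>{0<..<t}. f2 t - f2 0 = f2' u (t - 0)"
      proof (rule mvt_simple[of 0 t f2 f2'])
        fix u assume u: "0 \<le> u" "u \<le> t"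
        have "?P s u \<in> U" by (rule PU) (use s u t0 in auto)
        then have "pd i F differentiable at (?P s u)" by (rule di)
        then show "(f2 has_derivative f2' u) (at u within {0..t})"
          unfolding f2_def f2'_def by (rule line_deriv_pd)
      qed (use t in simp)
      then obtain u where um: "u \<in> {0<..<t}" and eq2': "f2 t - f2 0 = f2' u (t - 0)" by blast
      have u: "0 < u" "u < t" using um by auto
      have eq2: "pd i F (?P s t) $ k - pd i F (?P s 0) $ k = t * pd j (pd i F) (?P s u) $ k"
        using eq2' unfolding f2_def f2'_def by (simp add: algebra_simps)
      define g1 where "g1 = (\<lambda>s. F ((x + t *\<^sub>R ?a) + s *\<^sub>R ?b) $ k - F (x + s *\<^sub>R ?b) $ k)"
      define g1' where "g1' = (\<lambda>s h. h * (pd j F ((x + t *\<^sub>R ?a) + s *\<^sub>R ?b) $ k - pd j F (x + s *\<^sub>R ?b) $ k))"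
      have "\<exists>s\<in>{0<..<t}. g1 t - g1 0 = g1' s (t - 0)"
      proof (rule mvt_simple[of 0 t g1 g1'])
        fix s assume s: "0 \<le> s" "s \<le> t"
        have e1: "(x + t *\<^sub>R ?a) + s *\<^sub>R ?b = ?P t s" by (simp add: algebra_simps)
        have e2: "x + s *\<^sub>R ?b = ?P 0 s" by simp
        have "?P t s \<in> U" by (rule PU) (use s t0 in auto)
        then have "F differentiable at (?P t s)" by (rule dF)
        then have "F differentiable at ((x + t *\<^sub>R ?a) + s *\<^sub>R ?b)" by simp
        then have D1: "((\<lambda>s. F ((x + t *\<^sub>R ?a) + s *\<^sub>R ?b) $ k) has_derivative
           (\<lambda>h. h * (pd j F ((x + t *\<^sub>R ?a) + s *\<^sub>R ?b) $ k))) (at s within {0..t})"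
          by (rule line_deriv_pd)
        have "?P 0 s \<in> U" by (rule PU) (use s t0 in auto)
        then have "F differentiable at (?P 0 s)" by (rule dF)
        then have "F differentiable at (x + s *\<^sub>R ?b)" by simp
        then have D2: "((\<lambda>s. F (x + s *\<^sub>R ?b) $ k) has_derivative
           (\<lambda>h. h * (pd j F (x + s *\<^sub>R ?b) $ k))) (at s within {0..t})"
          by (rule line_deriv_pd)
        show "(g1 has_derivative g1' s) (at s within {0..t})"
          unfolding g1_def g1'_def
          by (rule has_derivative_eq_rhs[OF has_derivative_diff[OF D1 D2]])
             (simp add: fun_eq_iff algebra_simps)
      qed (use t in simp)
      then obtain s' where s'm: "s' \<in> {0<..<t}" and eq3': "g1 t - g1 0 = g1' s' (t - 0)" by blast
      have s': "0 < s'" "s' < t" using s'm by auto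
      have eq3: "\<Delta> = t * (pd j F (?P t s') $ k - pd j F (?P 0 s') $ k)"
      proof -
        have "g1 t - g1 0 = \<Delta>" unfolding g1_def \<Delta>_def by (simp add: algebra_simps)
        moreover have "g1' s' t = t * (pd j F (?P t s') $ k - pd j F (?P 0 s') $ k)"
          unfolding g1'_def by (simp add: algebra_simps)
        ultimately show ?thesis using eq3' by simp
      qed
      define g2 where "g2 = (\<lambda>u. pd j F ((x + s' *\<^sub>R ?b) + u *\<^sub>R ?a) $ k)"
      define g2' where "g2' = (\<lambda>u h. h * (pd i (pd j F) ((x + s' *\<^sub>R ?b) + u *\<^sub>R ?a) $ k))"
      have "\<exists>u\<in>{0<..<t}. g2 t - g2 0 = g2' u (t - 0)"
      proof (rule mvt_simple[of 0 t g2 g2'])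
        fix u assume u: "0 \<le> u" "u \<le> t"
        have e1: "(x + s' *\<^sub>R ?b) + u *\<^sub>R ?a = ?P u s'" by (simp add: algebra_simps)
        have "?P u s' \<in> U" by (rule PU) (use s' u t0 in auto)
        then have "pd j F differentiable at (?P u s')" by (rule dj)
        then have "pd j F differentiable at ((x + s' *\<^sub>R ?b) + u *\<^sub>R ?a)" by (simp only: e1)
        then show "(g2 has_derivative g2' u) (at u within {0..t})"
          unfolding g2_def g2'_def by (rule line_deriv_pd)
      qed (use t in simp)
      then obtain u' where u'm: "u' \<in> {0<..<t}" and eq4': "g2 t - g2 0 = g2' u' (t - 0)" by blast
      have u': "0 < u'" "u' < t" using u'm by auto
      have eq4: "pd j F (?P t s') $ k - pd j F (?P 0 s') $ k = t * pd i (pd j F) (?P u' s') $ k"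
        using eq4' unfolding g2_def g2'_def by (simp add: algebra_simps)
      have h1: "\<Delta> = t * (t * pd j (pd i F) (?P s u) $ k)" using eq1 eq2 by simp
      have h2: "\<Delta> = t * (t * pd i (pd j F) (?P u' s') $ k)" using eq3 eq4 by simp
      have "t * (t * pd j (pd i F) (?P s u) $ k) = t * (t * pd i (pd j F) (?P u' s') $ k)"
        using h1 h2 by metis
      then have same: "pd j (pd i F) (?P s u) $ k = pd i (pd j F) (?P u' s') $ k" using t by simp
      have "\<bar>pd j (pd i F) (?P s u) $ k - ?A\<bar> < e"
      proof -
        have "\<bar>(pd j (pd i F) (?P s u) - pd j (pd i F) x) $ k\<bar> \<le> norm (pd j (pd i F) (?P s u) - pd j (pd i F) x)"
          by (rule component_le_norm_cart)
        also have "\<dots> < e" using d1(2)[of "?P s u"] inU[of s u] s u by (simp add: dist_norm)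
        finally show ?thesis by simp
      qed
      moreover have "\<bar>pd i (pd j F) (?P u' s') $ k - ?B\<bar> < e"
      proof -
        have "\<bar>(pd i (pd j F) (?P u' s') - pd i (pd j F) x) $ k\<bar> \<le> norm (pd i (pd j F) (?P u' s') - pd i (pd j F) x)"
          by (rule component_le_norm_cart)
        also have "\<dots> < e" using d2(2)[of "?P u' s'"] inU[of u' s'] s' u' by (simp add: dist_norm)
        finally show ?thesis by simp
      qed
      ultimately show ?thesis using same by linarith
    qed
    show "?B = ?A"
    proof (rule ccontr)
      assume "?B \<noteq> ?A"
      then have "\<bar>?B - ?A\<bar> / 4 > 0" by simp
      from key[OF this] show False by (simp add: field_simps)
    qed
  qed
qed

lemma swap3: "(\<Sum>l\<in>UNIV. \<Sum>p\<in>UNIV. \<Sum>q\<in>UNIV. f (l::'a::finite) (p::'b::finite) (q::'c::finite)) = (\<Sum>p\<in>UNIV. \<Sum>q\<in>UNIV. \<Sum>l\<in>UNIV. (f l p q :: real))"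
proof -
  have "(\<Sum>l\<in>UNIV. \<Sum>p\<in>UNIV. \<Sum>q\<in>UNIV. f l p q) = (\<Sum>p\<in>UNIV. \<Sum>l\<in>UNIV. \<Sum>q\<in>UNIV. f l p q)" by (rule sum.swap)
  also have "\<dots> = (\<Sum>p\<in>UNIV. \<Sum>q\<in>UNIV. \<Sum>l\<in>UNIV. f l p q)" by (rule sum.cong[OF refl], rule sum.swap)
  finally show ?thesis .
qed

lemma gauss_alg:
  fixes E :: "'m::finite \<Rightarrow> real^'n::finite" and T :: "'m \<Rightarrow> 'm \<Rightarrow> real^'n"
    and Tc :: "'m \<Rightarrow> 'm \<Rightarrow> 'm \<Rightarrow> real^'n" and G :: "'m \<Rightarrow> 'm \<Rightarrow> real"
    and eta phi :: "real^'n"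
  assumes Tsym: "\<And>a b. T a b = T b a"
    and Tcsym: "\<And>c a b. Tc c a b = Tc b a c"
    and GI: "\<And>k j. (\<Sum>l\<in>UNIV. G k l * (E l \<bullet> E j)) = (if k = j then 1 else 0)"
    and pars: "\<And>u v. u \<bullet> v = (\<Sum>b\<in>UNIV. (\<Sum>a\<in>UNIV. G b a * (u \<bullet> E a)) * (v \<bullet> E b))
                 + (u \<bullet> eta) * (v \<bullet> eta) + (u \<bullet> phi) * (v \<bullet> phi)"
    and Tphi: "\<And>a b. T a b \<bullet> phi = - (E a \<bullet> E b)"
    and Gam: "\<And>k i j. Gm k i j = (\<Sum>l\<in>UNIV. G k l * (T i j \<bullet> E l))"
    and dGdef: "\<And>c k l. dG c k l = - (\<Sum>p\<in>UNIV. \<Sum>q\<in>UNIV. G k p * (T c p \<bullet> E q + E p \<bullet> T c q) * G q l)"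
    and dGam: "\<And>c k i j. dGm c k i j = (\<Sum>l\<in>UNIV. dG c k l * (T i j \<bullet> E l) + G k l * (Tc c i j \<bullet> E l + T i j \<bullet> T c l))"
  shows "(\<Sum>k\<in>UNIV. dGm k k i j - dGm j k i k + (\<Sum>l\<in>UNIV. Gm k k l * Gm l i j - Gm k j l * Gm l i k))
       = (real CARD('m) - 1) * (E i \<bullet> E j) + (\<Sum>k\<in>UNIV. \<Sum>l\<in>UNIV. G k l * (T k l \<bullet> eta)) * (T i j \<bullet> eta)
         - (\<Sum>k\<in>UNIV. \<Sum>l\<in>UNIV. (T i k \<bullet> eta) * G k l * (T l j \<bullet> eta))"
proof -
  have A: "(\<Sum>l\<in>UNIV. dG c k l * w l) = - (\<Sum>p\<in>UNIV. G k p * (\<Sum>q\<in>UNIV. (T c p \<bullet> E q + E p \<bullet> T c q) * (\<Sum>l\<in>UNIV. G q l * w l)))"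
    for c k w
  proof -
    have "(\<Sum>l\<in>UNIV. dG c k l * w l) = - (\<Sum>l\<in>UNIV. \<Sum>p\<in>UNIV. \<Sum>q\<in>UNIV. G k p * (T c p \<bullet> E q + E p \<bullet> T c q) * G q l * w l)"
      by (simp add: dGdef sum_distrib_right sum_negf)
    also have "\<dots> = - (\<Sum>p\<in>UNIV. \<Sum>q\<in>UNIV. \<Sum>l\<in>UNIV. G k p * (T c p \<bullet> E q + E p \<bullet> T c q) * G q l * w l)"
      by (rule arg_cong[where f=uminus], rule swap3)
    also have "\<dots> = - (\<Sum>p\<in>UNIV. G k p * (\<Sum>q\<in>UNIV. (T c p \<bullet> E q + E p \<bullet> T c q) * (\<Sum>l\<in>UNIV. G q l * w l)))"
      by (simp add: sum_distrib_left mult.assoc)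
    finally show ?thesis .
  qed

  have B: "dGm c k a b = - (\<Sum>p\<in>UNIV. \<Sum>q\<in>UNIV. G k p * (T c p \<bullet> E q) * Gm q a b)
      - (\<Sum>p\<in>UNIV. \<Sum>q\<in>UNIV. G k p * (E p \<bullet> T c q) * Gm q a b)
      + (\<Sum>l\<in>UNIV. G k l * (Tc c a b \<bullet> E l)) + (\<Sum>l\<in>UNIV. G k l * (T a b \<bullet> T c l))" for c k a b
  proof -
    have "dGm c k a b = (\<Sum>l\<in>UNIV. dG c k l * (T a b \<bullet> E l)) + (\<Sum>l\<in>UNIV. G k l * (Tc c a b \<bullet> E l + T a b \<bullet> T c l))"
      by (simp add: dGam sum.distrib)
    also have "(\<Sum>l\<in>UNIV. dG c k l * (T a b \<bullet> E l)) = - (\<Sum>p\<in>UNIV. G k p * (\<Sum>q\<in>UNIV. (T c p \<bullet> E q + E p \<bullet> T c q) * Gm q a b))"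
      using A[of c k "\<lambda>l. T a b \<bullet> E l"] by (simp add: Gam)
    also have "\<dots> = - (\<Sum>p\<in>UNIV. \<Sum>q\<in>UNIV. G k p * (T c p \<bullet> E q) * Gm q a b) - (\<Sum>p\<in>UNIV. \<Sum>q\<in>UNIV. G k p * (E p \<bullet> T c q) * Gm q a b)"
      by (simp add: sum_distrib_left distrib_right distrib_left sum.distrib mult.assoc)
    finally show ?thesis by (simp add: distrib_left sum.distrib)
  qed
  have C: "(\<Sum>l\<in>UNIV. Gm k a l * Gm l i b) = (\<Sum>p\<in>UNIV. \<Sum>q\<in>UNIV. G k p * (E p \<bullet> T a q) * Gm q i b)" for k a b
  proof -
    have "(\<Sum>l\<in>UNIV. Gm k a l * Gm l i b) = (\<Sum>l\<in>UNIV. \<Sum>p\<in>UNIV. G k p * (E p \<bullet> T a l) * Gm l i b)"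
      by (simp add: Gam[of k a] sum_distrib_right inner_commute)
    also have "\<dots> = (\<Sum>p\<in>UNIV. \<Sum>l\<in>UNIV. G k p * (E p \<bullet> T a l) * Gm l i b)" by (rule sum.swap)
    finally show ?thesis .
  qed
  have P: "(\<Sum>l\<in>UNIV. G k l * (T a b \<bullet> T c l)) = (\<Sum>p\<in>UNIV. \<Sum>q\<in>UNIV. G k p * (T c p \<bullet> E q) * Gm q a b)
      + (\<Sum>l\<in>UNIV. G k l * ((T a b \<bullet> eta) * (T c l \<bullet> eta) + (E a \<bullet> E b) * (E c \<bullet> E l)))" for k a b c
  proof -
    have "T a b \<bullet> T c l = (\<Sum>q\<in>UNIV. Gm q a b * (T c l \<bullet> E q)) + ((T a b \<bullet> eta) * (T c l \<bullet> eta) + (E a \<bullet> E b) * (E c \<bullet> E l))" for l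
      using pars[of "T a b" "T c l"] by (simp add: Gam Tphi)
    then have "(\<Sum>l\<in>UNIV. G k l * (T a b \<bullet> T c l)) = (\<Sum>l\<in>UNIV. \<Sum>q\<in>UNIV. G k l * (T c l \<bullet> E q) * Gm q a b)
      + (\<Sum>l\<in>UNIV. G k l * ((T a b \<bullet> eta) * (T c l \<bullet> eta) + (E a \<bullet> E b) * (E c \<bullet> E l)))"
      by (simp add: distrib_left sum.distrib sum_distrib_left mult_ac)
    then show ?thesis by simp
  qed
  have K: "dGm k k i j - dGm j k i k + (\<Sum>l\<in>UNIV. Gm k k l * Gm l i j - Gm k j l * Gm l i k)
     = (\<Sum>l\<in>UNIV. G k l * ((T i j \<bullet> eta) * (T k l \<bullet> eta) + (E i \<bullet> E j) * (E k \<bullet> E l)))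
     - (\<Sum>l\<in>UNIV. G k l * ((T i k \<bullet> eta) * (T j l \<bullet> eta) + (E i \<bullet> E k) * (E j \<bullet> E l)))" for k
  proof -
    have t3: "Tc j i k = Tc k i j" by (rule Tcsym)
    have tk: "T i k = T k i" by (rule Tsym)
    show ?thesis
      using B[of k k i j] B[of j k i k] C[of k k j] C[of k j k] P[of k i j k] P[of k i k j]
      by (simp add: sum_subtractf t3)
  qed

  have F1: "(\<Sum>k\<in>UNIV. \<Sum>l\<in>UNIV. G k l * (E k \<bullet> E l)) = real CARD('m)"
  proof -
    have "(\<Sum>l\<in>UNIV. G k l * (E k \<bullet> E l)) = 1" for k
      using GI[of k k] by (simp add: inner_commute)
    then show ?thesis by simp
  qed
  have F2: "(\<Sum>k\<in>UNIV. \<Sum>l\<in>UNIV. G k l * ((E i \<bullet> E k) * (E j \<bullet> E l))) = E i \<bullet> E j"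
  proof -
    have "(\<Sum>l\<in>UNIV. G k l * ((E i \<bullet> E k) * (E j \<bullet> E l))) = (E i \<bullet> E k) * (if k = j then 1 else 0)" for k
    proof -
      have "(\<Sum>l\<in>UNIV. G k l * ((E i \<bullet> E k) * (E j \<bullet> E l))) = (E i \<bullet> E k) * (\<Sum>l\<in>UNIV. G k l * (E l \<bullet> E j))"
        by (simp add: sum_distrib_left inner_commute mult_ac)
      then show ?thesis using GI[of k j] by simp
    qed
    then have "(\<Sum>l\<in>UNIV. G k l * ((E i \<bullet> E k) * (E j \<bullet> E l))) = (if k = j then E i \<bullet> E k else 0)" for k
      by simp
    then show ?thesis by simp
  qed
  have F3: "(\<Sum>k\<in>UNIV. \<Sum>l\<in>UNIV. G k l * ((T i k \<bullet> eta) * (T j l \<bullet> eta))) = (\<Sum>k\<in>UNIV. \<Sum>l\<in>UNIV. (T i k \<bullet> eta) * G k l * (T l j \<bullet> eta))"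
    by (simp add: Tsym[of j] mult_ac)
  have F4: "(\<Sum>k\<in>UNIV. \<Sum>l\<in>UNIV. G k l * ((T i j \<bullet> eta) * (T k l \<bullet> eta))) = (\<Sum>k\<in>UNIV. \<Sum>l\<in>UNIV. G k l * (T k l \<bullet> eta)) * (T i j \<bullet> eta)"
    by (simp add: sum_distrib_left mult_ac)
  have "(\<Sum>k\<in>UNIV. dGm k k i j - dGm j k i k + (\<Sum>l\<in>UNIV. Gm k k l * Gm l i j - Gm k j l * Gm l i k))
     = (\<Sum>k\<in>UNIV. \<Sum>l\<in>UNIV. G k l * ((T i j \<bullet> eta) * (T k l \<bullet> eta))) + (E i \<bullet> E j) * (\<Sum>k\<in>UNIV. \<Sum>l\<in>UNIV. G k l * (E k \<bullet> E l))
       - (\<Sum>k\<in>UNIV. \<Sum>l\<in>UNIV. G k l * ((T i k \<bullet> eta) * (T j l \<bullet> eta))) - (\<Sum>k\<in>UNIV. \<Sum>l\<in>UNIV. G k l * ((E i \<bullet> E k) * (E j \<bullet> E l)))"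
  proof -
    have "(\<Sum>k\<in>UNIV. dGm k k i j - dGm j k i k + (\<Sum>l\<in>UNIV. Gm k k l * Gm l i j - Gm k j l * Gm l i k))
      = (\<Sum>k\<in>UNIV. (\<Sum>l\<in>UNIV. G k l * ((T i j \<bullet> eta) * (T k l \<bullet> eta) + (E i \<bullet> E j) * (E k \<bullet> E l)))
     - (\<Sum>l\<in>UNIV. G k l * ((T i k \<bullet> eta) * (T j l \<bullet> eta) + (E i \<bullet> E k) * (E j \<bullet> E l))))"
      by (rule sum.cong[OF refl], rule K)
    then show ?thesis by (simp add: sum_subtractf distrib_left sum.distrib sum_distrib_left mult_ac)
  qed
  then show ?thesis using F1 F2 F3 F4 by (simp add: algebra_simps)
qed

lemma final_alg:
  fixes R g Gi H :: "real^'m::finite^'m" and X :: "real^'m" and mc :: real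
  assumes Ric: "\<And>i j. R $ i $ j = (real CARD('m) - 1) * g $ i $ j + (\<Sum>k\<in>UNIV. \<Sum>l\<in>UNIV. Gi $ k $ l * H $ k $ l) * H $ i $ j
                 - (\<Sum>k\<in>UNIV. \<Sum>l\<in>UNIV. H $ i $ k * Gi $ k $ l * H $ l $ j)"
    and gG: "\<And>i j. (\<Sum>k\<in>UNIV. g $ i $ k * Gi $ k $ j) = (if i = j then 1 else 0)"
    and Hsym: "\<And>i j. H $ i $ j = H $ j $ i"
    and gsym: "\<And>i j. g $ i $ j = g $ j $ i"
    and mc: "mc = (1 / real CARD('m)) * (\<Sum>i\<in>UNIV. \<Sum>j\<in>UNIV. Gi $ i $ j * H $ i $ j)"
    and shape: "(\<chi> i. \<Sum>k\<in>UNIV. \<Sum>j\<in>UNIV. Gi $ i $ k * H $ k $ j * X $ j) = (- (real CARD('m) / 2) * mc) *\<^sub>R X"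
  shows "(\<Sum>i\<in>UNIV. \<Sum>j\<in>UNIV. R $ i $ j * X $ i * X $ j)
    = (real CARD('m) - 1 - 3 * (real CARD('m))^2 / 4 * mc^2) * (\<Sum>i\<in>UNIV. \<Sum>j\<in>UNIV. g $ i $ j * X $ i * X $ j)"
proof -
  define m where "m = real CARD('m)"
  define c where "c = - (m / 2) * mc"
  define hX where "hX = (\<lambda>p. \<Sum>j\<in>UNIV. H $ p $ j * X $ j)"
  define N where "N = (\<Sum>i\<in>UNIV. \<Sum>j\<in>UNIV. g $ i $ j * X $ i * X $ j)"
  have m0: "m > 0" unfolding m_def by simp
  have tr: "(\<Sum>k\<in>UNIV. \<Sum>l\<in>UNIV. Gi $ k $ l * H $ k $ l) = m * mc" using mc m0 unfolding m_def by simp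
  have sh: "(\<Sum>k\<in>UNIV. Gi $ i $ k * hX k) = c * X $ i" for i
  proof -
    have "(\<Sum>k\<in>UNIV. \<Sum>j\<in>UNIV. Gi $ i $ k * H $ k $ j * X $ j) = c * X $ i"
      using arg_cong[where f="\<lambda>v. v $ i", OF shape] unfolding c_def m_def by simp
    then show ?thesis unfolding hX_def by (simp add: sum_distrib_left mult.assoc)
  qed
  have hX: "hX p = c * (\<Sum>i\<in>UNIV. g $ p $ i * X $ i)" for p
  proof -
    have "(\<Sum>i\<in>UNIV. g $ p $ i * (\<Sum>k\<in>UNIV. Gi $ i $ k * hX k)) = (\<Sum>k\<in>UNIV. (\<Sum>i\<in>UNIV. g $ p $ i * Gi $ i $ k) * hX k)"
      by (simp add: sum_distrib_left sum_distrib_right mult.assoc) (rule sum.swap)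
    also have "\<dots> = (\<Sum>k\<in>UNIV. if p = k then hX k else 0)" by (rule sum.cong[OF refl]) (simp add: gG)
    also have "\<dots> = hX p" by simp
    finally have "hX p = (\<Sum>i\<in>UNIV. g $ p $ i * (c * X $ i))" using sh by simp
    then show ?thesis by (simp add: sum_distrib_left mult_ac)
  qed
  have S1: "(\<Sum>i\<in>UNIV. \<Sum>j\<in>UNIV. H $ i $ j * X $ i * X $ j) = c * N"
  proof -
    have "(\<Sum>i\<in>UNIV. \<Sum>j\<in>UNIV. H $ i $ j * X $ i * X $ j) = (\<Sum>i\<in>UNIV. X $ i * hX i)"
      unfolding hX_def by (simp add: sum_distrib_left mult_ac)
    also have "\<dots> = (\<Sum>i\<in>UNIV. X $ i * (c * (\<Sum>j\<in>UNIV. g $ i $ j * X $ j)))" using hX by simp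
    also have "\<dots> = c * N" unfolding N_def by (simp add: sum_distrib_left mult_ac)
    finally show ?thesis .
  qed
  have S2: "(\<Sum>i\<in>UNIV. \<Sum>j\<in>UNIV. (\<Sum>k\<in>UNIV. \<Sum>l\<in>UNIV. H $ i $ k * Gi $ k $ l * H $ l $ j) * X $ i * X $ j) = c * c * N"
  proof -
    have "(\<Sum>i\<in>UNIV. \<Sum>j\<in>UNIV. (\<Sum>k\<in>UNIV. \<Sum>l\<in>UNIV. H $ i $ k * Gi $ k $ l * H $ l $ j) * X $ i * X $ j)
        = (\<Sum>i\<in>UNIV. X $ i * (\<Sum>k\<in>UNIV. H $ i $ k * (\<Sum>l\<in>UNIV. Gi $ k $ l * hX l)))"
    proof -
      have "(\<Sum>j\<in>UNIV. (\<Sum>k\<in>UNIV. \<Sum>l\<in>UNIV. H $ i $ k * Gi $ k $ l * H $ l $ j) * X $ i * X $ j)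
          = X $ i * (\<Sum>k\<in>UNIV. H $ i $ k * (\<Sum>l\<in>UNIV. Gi $ k $ l * hX l))" for i
      proof -
        have "(\<Sum>j\<in>UNIV. (\<Sum>k\<in>UNIV. \<Sum>l\<in>UNIV. H $ i $ k * Gi $ k $ l * H $ l $ j) * X $ i * X $ j)
           = (\<Sum>j\<in>UNIV. \<Sum>k\<in>UNIV. \<Sum>l\<in>UNIV. X $ i * (H $ i $ k * (Gi $ k $ l * (H $ l $ j * X $ j))))"
          by (simp add: sum_distrib_right sum_distrib_left mult_ac)
        also have "\<dots> = (\<Sum>k\<in>UNIV. \<Sum>l\<in>UNIV. \<Sum>j\<in>UNIV. X $ i * (H $ i $ k * (Gi $ k $ l * (H $ l $ j * X $ j))))"
        proof -
          have "(\<Sum>j\<in>UNIV. \<Sum>k\<in>UNIV. \<Sum>l\<in>UNIV. X $ i * (H $ i $ k * (Gi $ k $ l * (H $ l $ j * X $ j))))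
              = (\<Sum>k\<in>UNIV. \<Sum>j\<in>UNIV. \<Sum>l\<in>UNIV. X $ i * (H $ i $ k * (Gi $ k $ l * (H $ l $ j * X $ j))))" by (rule sum.swap)
          also have "\<dots> = (\<Sum>k\<in>UNIV. \<Sum>l\<in>UNIV. \<Sum>j\<in>UNIV. X $ i * (H $ i $ k * (Gi $ k $ l * (H $ l $ j * X $ j))))"
            by (rule sum.cong[OF refl], rule sum.swap)
          finally show ?thesis .
        qed
        also have "\<dots> = X $ i * (\<Sum>k\<in>UNIV. H $ i $ k * (\<Sum>l\<in>UNIV. Gi $ k $ l * hX l))"
          unfolding hX_def by (simp add: sum_distrib_left)
        finally show ?thesis .
      qed
      then show ?thesis by simp
    qed
    also have "\<dots> = (\<Sum>i\<in>UNIV. X $ i * (c * hX i))"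
      using sh unfolding hX_def by (simp add: sum_distrib_left mult_ac)
    also have "\<dots> = c * (\<Sum>i\<in>UNIV. \<Sum>j\<in>UNIV. H $ i $ j * X $ i * X $ j)"
      unfolding hX_def by (simp add: sum_distrib_left mult_ac)
    also have "\<dots> = c * c * N" using S1 by simp
    finally show ?thesis .
  qed
  have "(\<Sum>i\<in>UNIV. \<Sum>j\<in>UNIV. R $ i $ j * X $ i * X $ j)
      = (m - 1) * N + (m * mc) * (\<Sum>i\<in>UNIV. \<Sum>j\<in>UNIV. H $ i $ j * X $ i * X $ j)
        - (\<Sum>i\<in>UNIV. \<Sum>j\<in>UNIV. (\<Sum>k\<in>UNIV. \<Sum>l\<in>UNIV. H $ i $ k * Gi $ k $ l * H $ l $ j) * X $ i * X $ j)"
    unfolding N_def Ric tr m_def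
    by (simp add: algebra_simps sum_subtractf sum.distrib sum_distrib_left)
  also have "\<dots> = (m - 1 - 3 * m^2 / 4 * mc^2) * N"
    unfolding S1 S2 c_def by (simp add: algebra_simps power2_eq_square)
  finally show ?thesis unfolding m_def N_def .
qed

lemma pd_inner:
  fixes F G :: "real^'m::finite \<Rightarrow> real^'n::finite"
  assumes "F differentiable (at y)" "G differentiable (at y)"
  shows "pd a (\<lambda>z. F z \<bullet> G z) y = pd a F y \<bullet> G y + F y \<bullet> pd a G y"
proof -
  have "((\<lambda>z. F z \<bullet> G z) has_derivative
      (\<lambda>h. F y \<bullet> frechet_derivative G (at y) h + frechet_derivative F (at y) h \<bullet> G y)) (at y)"
    by (rule has_derivative_inner[OF pd_works[OF assms(1)] pd_works[OF assms(2)]])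
  from pd_has[OF this, of a] show ?thesis unfolding pd_def by simp
qed

lemma pd_mult:
  fixes f g :: "real^'m::finite \<Rightarrow> real"
  assumes "f differentiable (at y)" "g differentiable (at y)"
  shows "pd a (\<lambda>z. f z * g z) y = pd a f y * g y + f y * pd a g y"
proof -
  have "((\<lambda>z. f z * g z) has_derivative
      (\<lambda>h. f y * frechet_derivative g (at y) h + frechet_derivative f (at y) h * g y)) (at y)"
    by (rule has_derivative_mult[OF pd_works[OF assms(1)] pd_works[OF assms(2)]])
  from pd_has[OF this, of a] show ?thesis unfolding pd_def by simp
qed

lemma pd_sum:
  fixes f :: "'i \<Rightarrow> real^'m::finite \<Rightarrow> real"
  assumes "finite S" "\<And>l. l \<in> S \<Longrightarrow> f l differentiable (at y)"
  shows "pd a (\<lambda>z. \<Sum>l\<in>S. f l z) y = (\<Sum>l\<in>S. pd a (f l) y)"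
proof -
  have "((\<lambda>z. \<Sum>l\<in>S. f l z) has_derivative (\<lambda>h. \<Sum>l\<in>S. frechet_derivative (f l) (at y) h)) (at y)"
    by (rule has_derivative_sum) (use assms pd_works in blast)
  from pd_has[OF this, of a] show ?thesis unfolding pd_def by simp
qed

lemma pd_const: "pd a (\<lambda>z. c) y = 0"
  unfolding pd_def by simp

lemma differentiable_prod_fin:
  fixes f :: "'i \<Rightarrow> real^'m::finite \<Rightarrow> real"
  assumes "finite S" "\<And>l. l \<in> S \<Longrightarrow> f l differentiable (at y)"
  shows "(\<lambda>z. \<Prod>l\<in>S. f l z) differentiable (at y)"
  using assms by (induction S rule: finite_induct) auto

lemma det_differentiable:
  fixes M :: "real^'m::finite \<Rightarrow> real^'k::finite^'k"
  assumes "\<And>i j. (\<lambda>z. M z $ i $ j) differentiable (at y)"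
  shows "(\<lambda>z. det (M z)) differentiable (at y)"
  unfolding det_def
  by (auto intro!: differentiable_sum differentiable_mult differentiable_prod_fin assms)

locale hyp =
  fixes U :: "(real^'m::finite) set" and \<phi> \<eta> :: "real^'m \<Rightarrow> real^'n::finite"
  assumes hs: "sphere_hypersurface_chart U \<phi> \<eta>"
begin

lemma openU: "open U" using hs unfolding sphere_hypersurface_chart_def by blast

lemma sm: "y \<in> U \<Longrightarrow> ipd is \<phi> differentiable (at y)"
  using hs unfolding sphere_hypersurface_chart_def smooth_on_chart_def by blast

lemma dphi: "y \<in> U \<Longrightarrow> \<phi> differentiable (at y)" using sm[of y "[]"] by simp
lemma dE: "y \<in> U \<Longrightarrow> pd a \<phi> differentiable (at y)" using sm[of y "[a]"] by simp
lemma dT: "y \<in> U \<Longrightarrow> pd a (pd b \<phi>) differentiable (at y)" using sm[of y "[a,b]"] by simp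
lemma dT3: "y \<in> U \<Longrightarrow> pd c (pd a (pd b \<phi>)) differentiable (at y)" using sm[of y "[c,a,b]"] by simp

lemma Tsym: "y \<in> U \<Longrightarrow> pd a (pd b \<phi>) y = pd b (pd a \<phi>) y"
  by (rule schwarz[OF openU]) (auto intro: dphi dE differentiable_imp_continuous_within dT)

lemma T3sym: assumes x: "x \<in> U"
  shows "pd c (pd a (pd b \<phi>)) x = pd b (pd a (pd c \<phi>)) x"
proof -
  have "pd c (pd a (pd b \<phi>)) x = pd c (pd b (pd a \<phi>)) x"
    by (rule pd_local[OF openU x]) (rule Tsym)
  also have "\<dots> = pd b (pd c (pd a \<phi>)) x"
    by (rule schwarz[OF openU x])
       (auto intro: dphi dE dT differentiable_imp_continuous_within[OF dT3[OF x]])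
  also have "\<dots> = pd b (pd a (pd c \<phi>)) x"
    by (rule pd_local[OF openU x]) (rule Tsym)
  finally show ?thesis .
qed

lemma phiphi: "y \<in> U \<Longrightarrow> \<phi> y \<bullet> \<phi> y = 1"
  using hs unfolding sphere_hypersurface_chart_def by (metis power2_norm_eq_inner power_one)

lemma Ephi: assumes y: "y \<in> U" shows "pd a \<phi> y \<bullet> \<phi> y = 0"
proof -
  have "pd a (\<lambda>z. \<phi> z \<bullet> \<phi> z) y = pd a (\<lambda>z. 1) y"
    by (rule pd_local[OF openU y]) (rule phiphi)
  then have "pd a \<phi> y \<bullet> \<phi> y + \<phi> y \<bullet> pd a \<phi> y = 0"
    using pd_inner[OF dphi[OF y] dphi[OF y], of a] pd_const by simp
  then show ?thesis by (simp add: inner_commute)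
qed

lemma Tphi: assumes x: "x \<in> U" shows "pd a (pd b \<phi>) x \<bullet> \<phi> x = - (pd a \<phi> x \<bullet> pd b \<phi> x)"
proof -
  have "pd a (\<lambda>z. pd b \<phi> z \<bullet> \<phi> z) x = pd a (\<lambda>z. 0) x"
    by (rule pd_local[OF openU x]) (rule Ephi)
  then have "pd a (pd b \<phi>) x \<bullet> \<phi> x + pd b \<phi> x \<bullet> pd a \<phi> x = 0"
    using pd_inner[OF dE[OF x] dphi[OF x], of a b] pd_const by simp
  then show ?thesis by (simp add: inner_commute)
qed

lemma eta_facts: assumes x: "x \<in> U"
  shows "\<eta> x \<bullet> pd a \<phi> x = 0" "\<eta> x \<bullet> \<phi> x = 0" "\<eta> x \<bullet> \<eta> x = 1"
  using hs x unfolding sphere_hypersurface_chart_def by (auto simp: power2_norm_eq_inner[symmetric])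

lemma metric_entry: "metric \<phi> y $ i $ j = pd i \<phi> y \<bullet> pd j \<phi> y"
  by (simp add: metric_def)

lemma Dsum: assumes y: "y \<in> U"
  shows "frechet_derivative \<phi> (at y) c = (\<Sum>j\<in>UNIV. c $ j *\<^sub>R pd j \<phi> y)"
proof -
  have lin: "linear (frechet_derivative \<phi> (at y))"
    using pd_works[OF dphi[OF y]] has_derivative_linear by blast
  have "c = (\<Sum>j\<in>UNIV. c $ j *\<^sub>R axis j 1)"
    using basis_expansion[of c] by (simp add: scalar_mult_eq_scaleR)
  then have "frechet_derivative \<phi> (at y) c = frechet_derivative \<phi> (at y) (\<Sum>j\<in>UNIV. c $ j *\<^sub>R axis j 1)"
    by simp
  also have "\<dots> = (\<Sum>j\<in>UNIV. c $ j *\<^sub>R pd j \<phi> y)"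
    using lin by (simp add: linear_sum linear_scale pd_def)
  finally show ?thesis .
qed

lemma metric_ker: assumes y: "y \<in> U" and c: "metric \<phi> y *v c = 0" shows "c = 0"
proof -
  let ?D = "frechet_derivative \<phi> (at y)"
  have lin: "linear ?D"
    using pd_works[OF dphi[OF y]] has_derivative_linear by blast
  have "pd i \<phi> y \<bullet> ?D c = 0" for i
  proof -
    have "pd i \<phi> y \<bullet> ?D c = (\<Sum>j\<in>UNIV. metric \<phi> y $ i $ j * c $ j)"
      by (simp add: Dsum[OF y] inner_sum_right metric_entry mult.commute)
    also have "\<dots> = (metric \<phi> y *v c) $ i" by (simp add: matrix_vector_mult_def)
    finally show ?thesis using c by simp
  qed
  then have h: "?D c \<bullet> pd i \<phi> y = 0" for i by (simp add: inner_commute)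
  have "?D c \<bullet> ?D c = ?D c \<bullet> (\<Sum>j\<in>UNIV. c $ j *\<^sub>R pd j \<phi> y)"
    using Dsum[OF y, of c] by simp
  also have "\<dots> = 0" by (simp add: inner_sum_right h)
  finally have "?D c \<bullet> ?D c = 0" .
  then have "?D c = 0" by simp
  moreover have "?D 0 = 0" using lin linear_0 by blast
  moreover have "inj ?D" using hs y unfolding sphere_hypersurface_chart_def by blast
  ultimately show "c = 0" by (metis injD)
qed

lemma metric_inv_props: assumes y: "y \<in> U"
  shows "metric \<phi> y ** metric_inv \<phi> y = mat 1" "metric_inv \<phi> y ** metric \<phi> y = mat 1"
proof -
  have "\<exists>B. B ** metric \<phi> y = mat 1"
    using metric_ker[OF y] matrix_left_invertible_ker by blast
  then have "invertible (metric \<phi> y)" using invertible_left_inverse by blast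
  then have "\<exists>A'. metric \<phi> y ** A' = mat 1 \<and> A' ** metric \<phi> y = mat 1" unfolding invertible_def .
  then have "metric \<phi> y ** matrix_inv (metric \<phi> y) = mat 1 \<and> matrix_inv (metric \<phi> y) ** metric \<phi> y = mat 1"
    unfolding matrix_inv_def by (rule someI_ex)
  then show "metric \<phi> y ** metric_inv \<phi> y = mat 1" "metric_inv \<phi> y ** metric \<phi> y = mat 1"
    unfolding metric_inv_def by auto
qed

lemma gG: assumes y: "y \<in> U"
  shows "(\<Sum>k\<in>UNIV. metric \<phi> y $ i $ k * metric_inv \<phi> y $ k $ j) = (if i = j then 1 else 0)"
  using arg_cong[where f="\<lambda>A. A $ i $ j", OF metric_inv_props(1)[OF y]]
  by (simp add: matrix_matrix_mult_def mat_def)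

lemma Gg: assumes y: "y \<in> U"
  shows "(\<Sum>k\<in>UNIV. metric_inv \<phi> y $ i $ k * metric \<phi> y $ k $ j) = (if i = j then 1 else 0)"
  using arg_cong[where f="\<lambda>A. A $ i $ j", OF metric_inv_props(2)[OF y]]
  by (simp add: matrix_matrix_mult_def mat_def)

lemma det_nz: assumes y: "y \<in> U" shows "det (metric \<phi> y) \<noteq> 0"
  using metric_inv_props[OF y] invertible_det_nz invertible_def by blast

lemma Ginv_cramer: assumes y: "y \<in> U"
  shows "metric_inv \<phi> y $ k $ l =
    det (\<chi> i j. if j = k then axis l 1 $ i else metric \<phi> y $ i $ j) / det (metric \<phi> y)"
proof -
  let ?b = "\<chi> k. metric_inv \<phi> y $ k $ l"
  have "(metric \<phi> y *v ?b) $ i = axis l 1 $ i" for i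
  proof -
    have "(metric \<phi> y *v ?b) $ i = (\<Sum>k\<in>UNIV. metric \<phi> y $ i $ k * metric_inv \<phi> y $ k $ l)"
      by (simp add: matrix_vector_mult_def)
    also have "\<dots> = axis l 1 $ i" unfolding gG[OF y] by (simp add: axis_def)
    finally show ?thesis .
  qed
  then have "metric \<phi> y *v ?b = axis l 1" by (simp add: vec_eq_iff)
  then have "?b = (\<chi> k. det (\<chi> i j. if j = k then axis l 1 $ i else metric \<phi> y $ i $ j) / det (metric \<phi> y))"
    by (simp only: cramer[OF det_nz[OF y]])
  then have "?b $ k = (\<chi> k. det (\<chi> i j. if j = k then axis l 1 $ i else metric \<phi> y $ i $ j) / det (metric \<phi> y)) $ k"
    by (rule arg_cong)
  then show ?thesis by (simp only: vec_lambda_beta)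
qed

lemma metric_diff: "y \<in> U \<Longrightarrow> (\<lambda>z. metric \<phi> z $ i $ j) differentiable (at y)"
  by (simp add: metric_entry dE)

lemma Ginv_diff: assumes y: "y \<in> U" shows "(\<lambda>z. metric_inv \<phi> z $ k $ l) differentiable (at y)"
proof (rule differentiable_local[OF openU y])
  show "det (\<chi> i j. if j = k then axis l 1 $ i else metric \<phi> z $ i $ j) / det (metric \<phi> z) = metric_inv \<phi> z $ k $ l"
    if "z \<in> U" for z using Ginv_cramer[OF that] by simp
  have "(\<lambda>z. det (\<chi> i j. if j = k then axis l 1 $ i else metric \<phi> z $ i $ j)) differentiable (at y)"
  proof (rule det_differentiable)
    fix i j show "(\<lambda>z. (\<chi> i j. if j = k then axis l 1 $ i else metric \<phi> z $ i $ j) $ i $ j) differentiable (at y)"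
      by (cases "j = k") (simp_all add: metric_diff[OF y])
  qed
  moreover have "(\<lambda>z. det (metric \<phi> z)) differentiable (at y)"
    by (rule det_differentiable) (simp add: metric_diff[OF y])
  ultimately show "(\<lambda>z. det (\<chi> i j. if j = k then axis l 1 $ i else metric \<phi> z $ i $ j) / det (metric \<phi> z)) differentiable (at y)"
    using det_nz[OF y] by (auto intro!: differentiable_divide)
qed

lemma dmetric: assumes x: "x \<in> U"
  shows "pd c (\<lambda>y. metric \<phi> y $ l $ j) x = pd c (pd l \<phi>) x \<bullet> pd j \<phi> x + pd l \<phi> x \<bullet> pd c (pd j \<phi>) x"
  by (simp add: metric_entry pd_inner[OF dE[OF x] dE[OF x]])

lemma dGinv: assumes x: "x \<in> U"
  shows "pd c (\<lambda>y. metric_inv \<phi> y $ k $ q) x =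
    - (\<Sum>p\<in>UNIV. \<Sum>r\<in>UNIV. metric_inv \<phi> x $ k $ p * (pd c (pd p \<phi>) x \<bullet> pd r \<phi> x + pd p \<phi> x \<bullet> pd c (pd r \<phi>) x)
          * metric_inv \<phi> x $ r $ q)"
proof -
  let ?G = "metric_inv \<phi> x" and ?g = "metric \<phi> x"
  let ?dG = "\<lambda>l. pd c (\<lambda>y. metric_inv \<phi> y $ k $ l) x"
  let ?X = "\<lambda>l j. pd c (pd l \<phi>) x \<bullet> pd j \<phi> x + pd l \<phi> x \<bullet> pd c (pd j \<phi>) x"
  have star: "(\<Sum>l\<in>UNIV. ?dG l * ?g $ l $ j) = - (\<Sum>l\<in>UNIV. ?G $ k $ l * ?X l j)" for j
  proof -
    have "pd c (\<lambda>y. \<Sum>l\<in>UNIV. metric_inv \<phi> y $ k $ l * metric \<phi> y $ l $ j) x = pd c (\<lambda>y. if k = j then 1 else 0) x"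
      by (rule pd_local[OF openU x]) (rule Gg)
    also have "\<dots> = 0" by (rule pd_const)
    finally have "pd c (\<lambda>y. \<Sum>l\<in>UNIV. metric_inv \<phi> y $ k $ l * metric \<phi> y $ l $ j) x = 0" .
    moreover have "pd c (\<lambda>y. \<Sum>l\<in>UNIV. metric_inv \<phi> y $ k $ l * metric \<phi> y $ l $ j) x
        = (\<Sum>l\<in>UNIV. pd c (\<lambda>y. metric_inv \<phi> y $ k $ l * metric \<phi> y $ l $ j) x)"
      by (rule pd_sum) (auto intro!: differentiable_mult Ginv_diff[OF x] metric_diff[OF x])
    moreover have "pd c (\<lambda>y. metric_inv \<phi> y $ k $ l * metric \<phi> y $ l $ j) x = ?dG l * ?g $ l $ j + ?G $ k $ l * ?X l j" for l
      by (simp add: pd_mult[OF Ginv_diff[OF x] metric_diff[OF x]] dmetric[OF x])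
    ultimately show ?thesis by (simp add: sum.distrib eq_neg_iff_add_eq_0)
  qed
  have e: "(\<Sum>l\<in>UNIV. ?dG l * (if l = q then 1 else 0)) = (\<Sum>l\<in>UNIV. if l = q then ?dG l else 0)"
    by (rule sum.cong) auto
  have "?dG q = (\<Sum>l\<in>UNIV. ?dG l * (if l = q then 1 else 0))" unfolding e by simp
  also have "\<dots> = (\<Sum>l\<in>UNIV. ?dG l * (\<Sum>j\<in>UNIV. ?g $ l $ j * ?G $ j $ q))" by (simp only: gG[OF x])
  also have "\<dots> = (\<Sum>j\<in>UNIV. (\<Sum>l\<in>UNIV. ?dG l * ?g $ l $ j) * ?G $ j $ q)"
    by (simp add: sum_distrib_left sum_distrib_right mult.assoc) (rule sum.swap)
  also have "\<dots> = (\<Sum>j\<in>UNIV. - (\<Sum>l\<in>UNIV. ?G $ k $ l * ?X l j) * ?G $ j $ q)" by (simp only: star)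
  also have "\<dots> = - (\<Sum>l\<in>UNIV. \<Sum>j\<in>UNIV. ?G $ k $ l * ?X l j * ?G $ j $ q)"
    by (simp add: sum_distrib_right sum_negf) (rule sum.swap)
  finally show ?thesis .
qed

lemma Chr: assumes y: "y \<in> U"
  shows "christoffel \<phi> k i j y = (\<Sum>l\<in>UNIV. metric_inv \<phi> y $ k $ l * (pd i (pd j \<phi>) y \<bullet> pd l \<phi> y))"
proof -
  have "pd i (\<lambda>y. metric \<phi> y $ j $ l) y + pd j (\<lambda>y. metric \<phi> y $ i $ l) y - pd l (\<lambda>y. metric \<phi> y $ i $ j) y
      = 2 * (pd i (pd j \<phi>) y \<bullet> pd l \<phi> y)" for l
    using Tsym[OF y, of j i] Tsym[OF y, of l i] Tsym[OF y, of l j]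
    by (simp add: dmetric[OF y] inner_commute)
  then show ?thesis unfolding christoffel_def by (simp add: sum_distrib_left)
qed

lemma dChr: assumes x: "x \<in> U"
  shows "pd c (christoffel \<phi> k i j) x = (\<Sum>l\<in>UNIV. pd c (\<lambda>y. metric_inv \<phi> y $ k $ l) x * (pd i (pd j \<phi>) x \<bullet> pd l \<phi> x)
     + metric_inv \<phi> x $ k $ l * (pd c (pd i (pd j \<phi>)) x \<bullet> pd l \<phi> x + pd i (pd j \<phi>) x \<bullet> pd c (pd l \<phi>) x))"
proof -
  have "pd c (christoffel \<phi> k i j) x = pd c (\<lambda>y. \<Sum>l\<in>UNIV. metric_inv \<phi> y $ k $ l * (pd i (pd j \<phi>) y \<bullet> pd l \<phi> y)) x"
    by (rule pd_local[OF openU x]) (rule Chr)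
  also have "\<dots> = (\<Sum>l\<in>UNIV. pd c (\<lambda>y. metric_inv \<phi> y $ k $ l * (pd i (pd j \<phi>) y \<bullet> pd l \<phi> y)) x)"
    by (rule pd_sum) (auto intro!: differentiable_mult differentiable_inner Ginv_diff[OF x] dT[OF x] dE[OF x])
  also have "\<dots> = (\<Sum>l\<in>UNIV. pd c (\<lambda>y. metric_inv \<phi> y $ k $ l) x * (pd i (pd j \<phi>) x \<bullet> pd l \<phi> x)
     + metric_inv \<phi> x $ k $ l * (pd c (pd i (pd j \<phi>)) x \<bullet> pd l \<phi> x + pd i (pd j \<phi>) x \<bullet> pd c (pd l \<phi>) x))"
    by (simp add: pd_mult[OF Ginv_diff[OF x]] pd_inner[OF dT[OF x] dE[OF x]] dT[OF x] dE[OF x])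
  finally show ?thesis .
qed

lemma span_ortho: assumes x: "x \<in> U"
  and wE: "\<And>a. w \<bullet> pd a \<phi> x = 0" and we: "w \<bullet> \<eta> x = 0" and wp: "w \<bullet> \<phi> x = 0"
  shows "w = 0"
proof -
  let ?D = "frechet_derivative \<phi> (at x)"
  have linD: "linear ?D" using pd_works[OF dphi[OF x]] has_derivative_linear by blast
  define L where "L = (\<lambda>p :: (real^'m) \<times> (real \<times> real). ?D (fst p) + fst (snd p) *\<^sub>R \<eta> x + snd (snd p) *\<^sub>R \<phi> x)"
  have linL: "linear L"
    unfolding L_def by (rule linearI) (simp_all add: linear_add[OF linD] linear_scale[OF linD] algebra_simps)
  have Ee: "pd b \<phi> x \<bullet> \<eta> x = 0" for b using eta_facts[OF x] by (simp add: inner_commute)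
  have Dc_eta: "?D c \<bullet> \<eta> x = 0" for c
    by (simp add: Dsum[OF x] inner_sum_left Ee)
  have Dc_phi: "?D c \<bullet> \<phi> x = 0" for c
    by (simp add: Dsum[OF x] inner_sum_left Ephi[OF x])
  have ker: "p = 0" if "L p = 0" for p
  proof -
    obtain c s t where p: "p = (c, (s, t))" by (metis prod.collapse)
    have Lp: "?D c + s *\<^sub>R \<eta> x + t *\<^sub>R \<phi> x = 0" using that p L_def by simp
    have "(?D c + s *\<^sub>R \<eta> x + t *\<^sub>R \<phi> x) \<bullet> \<eta> x = 0" using Lp by simp
    moreover have "\<phi> x \<bullet> \<eta> x = 0" using eta_facts[OF x] by (simp add: inner_commute)
    ultimately have s0: "s = 0" using Dc_eta eta_facts[OF x] by (simp add: inner_add_left)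
    have "(?D c + s *\<^sub>R \<eta> x + t *\<^sub>R \<phi> x) \<bullet> \<phi> x = 0" using Lp by simp
    then have t0: "t = 0" using Dc_phi eta_facts[OF x] phiphi[OF x] by (simp add: inner_add_left)
    have "?D c = 0" using Lp s0 t0 by simp
    moreover have "?D 0 = 0" using linD linear_0 by blast
    moreover have "inj ?D" using hs x unfolding sphere_hypersurface_chart_def by blast
    ultimately have "c = 0" by (metis injD)
    then show ?thesis using p s0 t0 by (simp add: zero_prod_def)
  qed
  have injL: "inj_on L (span UNIV)"
  proof (rule inj_onI)
    fix a b assume "L a = L b"
    then have "L (a - b) = 0" using linear_diff[OF linL] by simp
    then show "a = b" using ker by fastforce
  qed
  have "dim (range L) = dim (UNIV :: ((real^'m) \<times> (real \<times> real)) set)"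
    using dim_image_eq[OF linL injL] by simp
  also have "\<dots> = CARD('m) + 2" by simp
  also have "\<dots> = CARD('n)" using hs unfolding sphere_hypersurface_chart_def by simp
  finally have "dim (range L) = DIM(real^'n)" by simp
  then have "span (range L) = UNIV" using dim_eq_full by blast
  moreover have "span (range L) = range L"
    using span_eq_iff linear_subspace_image[OF linL subspace_UNIV] by blast
  ultimately obtain p where wp': "w = L p" by (metis UNIV_I imageE)
  obtain c s t where p: "p = (c, (s, t))" by (metis prod.collapse)
  have wD: "w \<bullet> ?D c = 0"
    using wE by (simp add: Dsum[OF x] inner_sum_right)
  have "w \<bullet> w = w \<bullet> (?D c + s *\<^sub>R \<eta> x + t *\<^sub>R \<phi> x)" using wp' p L_def by simp
  also have "\<dots> = 0" using wD we wp by (simp add: inner_add_right)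
  finally show "w = 0" by simp
qed

lemma parseval: assumes x: "x \<in> U"
  shows "u \<bullet> v = (\<Sum>b\<in>UNIV. (\<Sum>a\<in>UNIV. metric_inv \<phi> x $ b $ a * (u \<bullet> pd a \<phi> x)) * (v \<bullet> pd b \<phi> x))
     + (u \<bullet> \<eta> x) * (v \<bullet> \<eta> x) + (u \<bullet> \<phi> x) * (v \<bullet> \<phi> x)"
proof -
  let ?G = "metric_inv \<phi> x" and ?g = "metric \<phi> x"
  define co where "co = (\<lambda>b. \<Sum>a\<in>UNIV. ?G $ b $ a * (u \<bullet> pd a \<phi> x))"
  define w where "w = u - (\<Sum>b\<in>UNIV. co b *\<^sub>R pd b \<phi> x) - (u \<bullet> \<eta> x) *\<^sub>R \<eta> x - (u \<bullet> \<phi> x) *\<^sub>R \<phi> x"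
  have Ee: "pd b \<phi> x \<bullet> \<eta> x = 0" for b using eta_facts[OF x] by (simp add: inner_commute)
  have wE: "w \<bullet> pd c \<phi> x = 0" for c
  proof -
    have "(\<Sum>b\<in>UNIV. co b * (pd b \<phi> x \<bullet> pd c \<phi> x)) = (\<Sum>a\<in>UNIV. (u \<bullet> pd a \<phi> x) * (\<Sum>b\<in>UNIV. ?g $ c $ b * ?G $ b $ a))"
    proof -
      have "(\<Sum>b\<in>UNIV. co b * (pd b \<phi> x \<bullet> pd c \<phi> x)) = (\<Sum>b\<in>UNIV. \<Sum>a\<in>UNIV. (u \<bullet> pd a \<phi> x) * (?g $ c $ b * ?G $ b $ a))"
        unfolding co_def by (simp add: sum_distrib_right sum_distrib_left metric_entry inner_commute mult_ac)
      also have "\<dots> = (\<Sum>a\<in>UNIV. \<Sum>b\<in>UNIV. (u \<bullet> pd a \<phi> x) * (?g $ c $ b * ?G $ b $ a))" by (rule sum.swap)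
      finally show ?thesis by (simp add: sum_distrib_left)
    qed
    also have "\<dots> = (\<Sum>a\<in>UNIV. if c = a then u \<bullet> pd a \<phi> x else 0)"
      by (rule sum.cong[OF refl]) (simp add: gG[OF x])
    also have "\<dots> = u \<bullet> pd c \<phi> x" by simp
    finally have "(\<Sum>b\<in>UNIV. co b * (pd b \<phi> x \<bullet> pd c \<phi> x)) = u \<bullet> pd c \<phi> x" .
    moreover have "\<phi> x \<bullet> pd c \<phi> x = 0" using Ephi[OF x, of c] by (simp add: inner_commute)
    moreover have "\<eta> x \<bullet> pd c \<phi> x = 0" using eta_facts[OF x] by simp
    ultimately show ?thesis
      unfolding w_def by (simp add: inner_diff_left inner_sum_left)
  qed
  have pe: "\<phi> x \<bullet> \<eta> x = 0" using eta_facts[OF x] by (simp add: inner_commute)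
  have we: "w \<bullet> \<eta> x = 0"
    unfolding w_def using eta_facts[OF x] Ee pe by (simp add: inner_diff_left inner_sum_left)
  have wp: "w \<bullet> \<phi> x = 0"
    unfolding w_def using eta_facts[OF x] Ephi[OF x] phiphi[OF x]
    by (simp add: inner_diff_left inner_sum_left)
  have "w = 0" by (rule span_ortho[OF x wE we wp])
  then have "u = (\<Sum>b\<in>UNIV. co b *\<^sub>R pd b \<phi> x) + (u \<bullet> \<eta> x) *\<^sub>R \<eta> x + (u \<bullet> \<phi> x) *\<^sub>R \<phi> x"
    unfolding w_def by (simp add: algebra_simps)
  then have "u \<bullet> v = ((\<Sum>b\<in>UNIV. co b *\<^sub>R pd b \<phi> x) + (u \<bullet> \<eta> x) *\<^sub>R \<eta> x + (u \<bullet> \<phi> x) *\<^sub>R \<phi> x) \<bullet> v"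
    by simp
  also have "\<dots> = (\<Sum>b\<in>UNIV. co b * (pd b \<phi> x \<bullet> v)) + (u \<bullet> \<eta> x) * (\<eta> x \<bullet> v) + (u \<bullet> \<phi> x) * (\<phi> x \<bullet> v)"
    by (simp add: inner_add_left inner_sum_left)
  also have "\<dots> = (\<Sum>b\<in>UNIV. co b * (v \<bullet> pd b \<phi> x)) + (u \<bullet> \<eta> x) * (v \<bullet> \<eta> x) + (u \<bullet> \<phi> x) * (v \<bullet> \<phi> x)"
    by (simp add: inner_commute)
  finally show ?thesis unfolding co_def .
qed

end

theorem mainTheorem14:
  fixes U :: "(real^'m::finite) set"
    and \<phi> \<eta> :: "real^'m \<Rightarrow> real^'n::finite"
  assumes "sphere_hypersurface_chart U \<phi> \<eta>"
    and "biharmonic_chart U \<phi> \<eta>"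
  shows "\<forall>x\<in>U.
    ricci_form \<phi> x (grad_chart \<phi> (mean_curv \<phi> \<eta>) x) (grad_chart \<phi> (mean_curv \<phi> \<eta>) x)
    = (real CARD('m) - 1 - 3 * (real CARD('m))^2 / 4 * (mean_curv \<phi> \<eta> x)^2)
      * g_inner \<phi> x (grad_chart \<phi> (mean_curv \<phi> \<eta>) x) (grad_chart \<phi> (mean_curv \<phi> \<eta>) x)"
proof
  fix x assume x: "x \<in> U"
  interpret hyp U \<phi> \<eta> by unfold_locales (rule assms(1))
  have Ric: "ricci \<phi> x $ i $ j = (real CARD('m) - 1) * metric \<phi> x $ i $ j
      + (\<Sum>k\<in>UNIV. \<Sum>l\<in>UNIV. metric_inv \<phi> x $ k $ l * sff \<phi> \<eta> x $ k $ l) * sff \<phi> \<eta> x $ i $ j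
      - (\<Sum>k\<in>UNIV. \<Sum>l\<in>UNIV. sff \<phi> \<eta> x $ i $ k * metric_inv \<phi> x $ k $ l * sff \<phi> \<eta> x $ l $ j)" for i j
  proof -
    have "(\<Sum>k\<in>UNIV. pd k (christoffel \<phi> k i j) x - pd j (christoffel \<phi> k i k) x
        + (\<Sum>l\<in>UNIV. christoffel \<phi> k k l x * christoffel \<phi> l i j x - christoffel \<phi> k j l x * christoffel \<phi> l i k x))
      = (real CARD('m) - 1) * (pd i \<phi> x \<bullet> pd j \<phi> x)
        + (\<Sum>k\<in>UNIV. \<Sum>l\<in>UNIV. metric_inv \<phi> x $ k $ l * (pd k (pd l \<phi>) x \<bullet> \<eta> x)) * (pd i (pd j \<phi>) x \<bullet> \<eta> x)
        - (\<Sum>k\<in>UNIV. \<Sum>l\<in>UNIV. (pd i (pd k \<phi>) x \<bullet> \<eta> x) * metric_inv \<phi> x $ k $ l * (pd l (pd j \<phi>) x \<bullet> \<eta> x))"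
    proof (rule gauss_alg[where E = "\<lambda>a. pd a \<phi> x" and T = "\<lambda>a b. pd a (pd b \<phi>) x"
        and Tc = "\<lambda>c a b. pd c (pd a (pd b \<phi>)) x" and G = "\<lambda>a b. metric_inv \<phi> x $ a $ b"
        and eta = "\<eta> x" and phi = "\<phi> x" and Gm = "\<lambda>k i j. christoffel \<phi> k i j x"
        and dG = "\<lambda>c k l. pd c (\<lambda>y. metric_inv \<phi> y $ k $ l) x"
        and dGm = "\<lambda>c k i j. pd c (christoffel \<phi> k i j) x"])
      show "\<And>a b. pd a (pd b \<phi>) x = pd b (pd a \<phi>) x" by (rule Tsym[OF x])
      show "\<And>c a b. pd c (pd a (pd b \<phi>)) x = pd b (pd a (pd c \<phi>)) x" by (rule T3sym[OF x])
      show "\<And>k j. (\<Sum>l\<in>UNIV. metric_inv \<phi> x $ k $ l * (pd l \<phi> x \<bullet> pd j \<phi> x)) = (if k = j then 1 else 0)"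
        using Gg[OF x] by (simp add: metric_entry)
      show "\<And>u v. u \<bullet> v = (\<Sum>b\<in>UNIV. (\<Sum>a\<in>UNIV. metric_inv \<phi> x $ b $ a * (u \<bullet> pd a \<phi> x)) * (v \<bullet> pd b \<phi> x))
                 + (u \<bullet> \<eta> x) * (v \<bullet> \<eta> x) + (u \<bullet> \<phi> x) * (v \<bullet> \<phi> x)" by (rule parseval[OF x])
      show "\<And>a b. pd a (pd b \<phi>) x \<bullet> \<phi> x = - (pd a \<phi> x \<bullet> pd b \<phi> x)" by (rule Tphi[OF x])
      show "\<And>k i j. christoffel \<phi> k i j x = (\<Sum>l\<in>UNIV. metric_inv \<phi> x $ k $ l * (pd i (pd j \<phi>) x \<bullet> pd l \<phi> x))"
        by (rule Chr[OF x])
      show "\<And>c k l. pd c (\<lambda>y. metric_inv \<phi> y $ k $ l) x = - (\<Sum>p\<in>UNIV. \<Sum>q\<in>UNIV. metric_inv \<phi> x $ k $ p *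
           (pd c (pd p \<phi>) x \<bullet> pd q \<phi> x + pd p \<phi> x \<bullet> pd c (pd q \<phi>) x) * metric_inv \<phi> x $ q $ l)"
        by (rule dGinv[OF x])
      show "\<And>c k i j. pd c (christoffel \<phi> k i j) x = (\<Sum>l\<in>UNIV. pd c (\<lambda>y. metric_inv \<phi> y $ k $ l) x * (pd i (pd j \<phi>) x \<bullet> pd l \<phi> x)
           + metric_inv \<phi> x $ k $ l * (pd c (pd i (pd j \<phi>)) x \<bullet> pd l \<phi> x + pd i (pd j \<phi>) x \<bullet> pd c (pd l \<phi>) x))"
        by (rule dChr[OF x])
    qed
    then show ?thesis by (simp add: ricci_def sff_def metric_entry)
  qed
  show "ricci_form \<phi> x (grad_chart \<phi> (mean_curv \<phi> \<eta>) x) (grad_chart \<phi> (mean_curv \<phi> \<eta>) x)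
    = (real CARD('m) - 1 - 3 * (real CARD('m))^2 / 4 * (mean_curv \<phi> \<eta> x)^2)
      * g_inner \<phi> x (grad_chart \<phi> (mean_curv \<phi> \<eta>) x) (grad_chart \<phi> (mean_curv \<phi> \<eta>) x)"
    unfolding ricci_form_def g_inner_def
  proof (rule final_alg)
    show "\<And>i j. ricci \<phi> x $ i $ j = (real CARD('m) - 1) * metric \<phi> x $ i $ j
      + (\<Sum>k\<in>UNIV. \<Sum>l\<in>UNIV. metric_inv \<phi> x $ k $ l * sff \<phi> \<eta> x $ k $ l) * sff \<phi> \<eta> x $ i $ j
      - (\<Sum>k\<in>UNIV. \<Sum>l\<in>UNIV. sff \<phi> \<eta> x $ i $ k * metric_inv \<phi> x $ k $ l * sff \<phi> \<eta> x $ l $ j)" by (rule Ric)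
    show "\<And>i j. (\<Sum>k\<in>UNIV. metric \<phi> x $ i $ k * metric_inv \<phi> x $ k $ j) = (if i = j then 1 else 0)"
      by (rule gG[OF x])
    show "\<And>i j. sff \<phi> \<eta> x $ i $ j = sff \<phi> \<eta> x $ j $ i" using Tsym[OF x] by (simp add: sff_def)
    show "\<And>i j. metric \<phi> x $ i $ j = metric \<phi> x $ j $ i" by (simp add: metric_entry inner_commute)
    show "mean_curv \<phi> \<eta> x = 1 / real CARD('m) * (\<Sum>i\<in>UNIV. \<Sum>j\<in>UNIV. metric_inv \<phi> x $ i $ j * sff \<phi> \<eta> x $ i $ j)"
      by (simp add: mean_curv_def)
    show "(\<chi> i. \<Sum>k\<in>UNIV. \<Sum>j\<in>UNIV. metric_inv \<phi> x $ i $ k * sff \<phi> \<eta> x $ k $ j * grad_chart \<phi> (mean_curv \<phi> \<eta>) x $ j)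
        = (- (real CARD('m) / 2) * mean_curv \<phi> \<eta> x) *\<^sub>R grad_chart \<phi> (mean_curv \<phi> \<eta>) x"
      using assms(2) x unfolding biharmonic_chart_def shape_op_def by blast
  qed
qed

end
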